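(* The set $\mathcal{D}$ of directed-convex polyominoes equals $Av_{\mathfrak{P}}(H,V,D)$, where $H=\begin{bmatrix}1&0&1\end{bmatrix}$, $V=\begin{bmatrix}1\\0\\1\end{bmatrix}$ and $D=\begin{bmatrix}1&1\\0&1\end{bmatrix}$.
   Context: A polyomino is a finite union of unit cells of $\mathbb{Z}\times\mathbb{Z}$ that is connected via edge adjacency, up to translation, identified with the binary matrix of its minimal bounding rectangle (entry $1$ iff the corresponding unit square is a cell; rows numbered bottom to top, and in displayed matrices the first written row is the top row). A matrix is a submatrix of another if obtained by deleting rows and/or columns; $Av_{\mathfrak{P}}(\mathcal{M})$ is the set of polyominoes with no submatrix in $\mathcal{M}$. A polyomino is convex if each of its rows and each of its columns is connected. An (internal) path of a polyomino is a sequence of distinct cells $(c_1,\dots,c_n)$ of the polyomino in which consecutive cells share an edge; the pair $(c_i,c_{i+1})$ is a north, south, east or west step according to the position of $c_{i+1}$ relative to $c_i$. A polyomino is directed if there is a cell (the source) from which every cell can be reached by a path using only north and east steps. A directed-convex polyomino is a polyomino that is both directed and convex. *)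

theory Defs
  imports Main
begin

type_synonym cell = "int \<times> int"   \<comment> \<open>(column x, row y); rows numbered bottom to top\<close>

definition adjacent :: "cell \<Rightarrow> cell \<Rightarrow> bool" where
  "adjacent a b \<longleftrightarrow> \<bar>fst a - fst b\<bar> + \<bar>snd a - snd b\<bar> = 1"

definition polyomino :: "cell set \<Rightarrow> bool" where
  "polyomino P \<longleftrightarrow> finite P \<and> P \<noteq> {} \<and>
     (\<forall>a\<in>P. \<forall>b\<in>P. (\<lambda>u v. u \<in> P \<and> v \<in> P \<and> adjacent u v)\<^sup>*\<^sup>* a b)"

text \<open>Binary matrix: list of rows, first row = top row; all rows of equal length.\<close>
type_synonym bmatrix = "bool list list"

text \<open>Submatrix containment: choose rows (top to bottom, i.e. strictly decreasing y)
  and columns (left to right, strictly increasing x) within the minimal bounding rectangle.\<close>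
definition contains :: "cell set \<Rightarrow> bmatrix \<Rightarrow> bool" where
  "contains P M \<longleftrightarrow> (\<exists>ys xs.
     length ys = length M \<and> (\<forall>r\<in>set M. length r = length xs) \<and>
     sorted_wrt (>) ys \<and> sorted_wrt (<) xs \<and>
     set ys \<subseteq> {Min (snd ` P)..Max (snd ` P)} \<and>
     set xs \<subseteq> {Min (fst ` P)..Max (fst ` P)} \<and>
     (\<forall>i<length ys. \<forall>j<length xs. M ! i ! j = ((xs ! j, ys ! i) \<in> P)))"

definition Av :: "bmatrix set \<Rightarrow> cell set set" where
  "Av \<M> = {P. polyomino P \<and> (\<forall>M\<in>\<M>. \<not> contains P M)}"

definition convex :: "cell set \<Rightarrow> bool" where
  "convex P \<longleftrightarrow>
     (\<forall>x1 x2 x y. (x1, y) \<in> P \<and> (x2, y) \<in> P \<and> x1 \<le> x \<and> x \<le> x2 \<longrightarrow> (x, y) \<in> P) \<and>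
     (\<forall>y1 y2 x y. (x, y1) \<in> P \<and> (x, y2) \<in> P \<and> y1 \<le> y \<and> y \<le> y2 \<longrightarrow> (x, y) \<in> P)"

definition ne_step :: "cell set \<Rightarrow> cell \<Rightarrow> cell \<Rightarrow> bool" where
  "ne_step P a b \<longleftrightarrow> a \<in> P \<and> b \<in> P \<and>
     (b = (fst a, snd a + 1) \<or> b = (fst a + 1, snd a))"

definition directed :: "cell set \<Rightarrow> bool" where
  "directed P \<longleftrightarrow> (\<exists>s\<in>P. \<forall>c\<in>P. (ne_step P)\<^sup>*\<^sup>* s c)"

definition directed_convex_polyominoes :: "cell set set" where
  "directed_convex_polyominoes = {P. polyomino P \<and> directed P \<and> convex P}"

definition H_pat :: bmatrix where "H_pat = [[True, False, True]]"
definition V_pat :: bmatrix where "V_pat = [[True], [False], [True]]"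
definition D_pat :: bmatrix where "D_pat = [[True, True], [False, True]]"

end

theory Submission
  imports Defs
begin

lemma len1: "length xs = Suc 0 \<Longrightarrow> \<exists>a. xs = [a]"
  by (cases xs) auto
lemma len2: "length xs = 2 \<Longrightarrow> \<exists>a b. xs = [a,b]"
  by (cases xs; cases "tl xs") auto
lemma len3: "length xs = 3 \<Longrightarrow> \<exists>a b c. xs = [a,b,c]"
  by (cases xs; cases "tl xs"; cases "tl (tl xs)") auto

lemma contains_H: "contains P H_pat \<longleftrightarrow> (\<exists>y x1 x2 x3. x1 < x2 \<and> x2 < x3 \<and>
   y \<in> {Min (snd ` P)..Max (snd ` P)} \<and> {x1,x2,x3} \<subseteq> {Min (fst ` P)..Max (fst ` P)} \<and>
   (x1,y) \<in> P \<and> (x2,y) \<notin> P \<and> (x3,y) \<in> P)"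
proof
  assume "contains P H_pat"
  then obtain ys xs where h0: "length ys = length H_pat" "\<forall>r\<in>set H_pat. length r = length xs" "sorted_wrt (<) xs"
    "set ys \<subseteq> {Min (snd ` P)..Max (snd ` P)}" "set xs \<subseteq> {Min (fst ` P)..Max (fst ` P)}"
    "\<forall>i<length ys. \<forall>j<length xs. H_pat ! i ! j = ((xs ! j, ys ! i) \<in> P)"
    unfolding contains_def by blast
  have h: "length ys = 1" "length xs = 3" "sorted_wrt (<) xs"
    "set ys \<subseteq> {Min (snd ` P)..Max (snd ` P)}" "set xs \<subseteq> {Min (fst ` P)..Max (fst ` P)}"
    "\<forall>i<length ys. \<forall>j<length xs. H_pat ! i ! j = ((xs ! j, ys ! i) \<in> P)"
    using h0 by (auto simp: H_pat_def)
  obtain y where y: "ys = [y]" using len1 h(1) by auto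
  obtain a b c where x: "xs = [a,b,c]" using len3 h(2) by blast
  have "H_pat ! 0 ! 0 = ((a, y) \<in> P)" "H_pat ! 0 ! 1 = ((b, y) \<in> P)" "H_pat ! 0 ! 2 = ((c, y) \<in> P)"
    using h(6) unfolding x y by auto
  then show "\<exists>y x1 x2 x3. x1 < x2 \<and> x2 < x3 \<and>
   y \<in> {Min (snd ` P)..Max (snd ` P)} \<and> {x1,x2,x3} \<subseteq> {Min (fst ` P)..Max (fst ` P)} \<and>
   (x1,y) \<in> P \<and> (x2,y) \<notin> P \<and> (x3,y) \<in> P"
    using h(3,4,5) unfolding x y H_pat_def by (intro exI[of _ y] exI[of _ a] exI[of _ b] exI[of _ c]) auto
next
  assume "\<exists>y x1 x2 x3. x1 < x2 \<and> x2 < x3 \<and>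
   y \<in> {Min (snd ` P)..Max (snd ` P)} \<and> {x1,x2,x3} \<subseteq> {Min (fst ` P)..Max (fst ` P)} \<and>
   (x1,y) \<in> P \<and> (x2,y) \<notin> P \<and> (x3,y) \<in> P"
  then obtain y a b c where h: "a < b" "b < c" "y \<in> {Min (snd ` P)..Max (snd ` P)}"
    "{a,b,c} \<subseteq> {Min (fst ` P)..Max (fst ` P)}" "(a,y) \<in> P" "(b,y) \<notin> P" "(c,y) \<in> P" by blast
  show "contains P H_pat" unfolding contains_def
    apply (rule exI[of _ "[y]"], rule exI[of _ "[a,b,c]"])
    using h by (auto simp: H_pat_def less_Suc_eq nth_Cons')
qed

lemma contains_V: "contains P V_pat \<longleftrightarrow> (\<exists>x y1 y2 y3. y2 < y1 \<and> y3 < y2 \<and>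
   x \<in> {Min (fst ` P)..Max (fst ` P)} \<and> {y1,y2,y3} \<subseteq> {Min (snd ` P)..Max (snd ` P)} \<and>
   (x,y1) \<in> P \<and> (x,y2) \<notin> P \<and> (x,y3) \<in> P)"
proof
  assume "contains P V_pat"
  then obtain ys xs where h0: "length ys = length V_pat" "\<forall>r\<in>set V_pat. length r = length xs" "sorted_wrt (>) ys"
    "set ys \<subseteq> {Min (snd ` P)..Max (snd ` P)}" "set xs \<subseteq> {Min (fst ` P)..Max (fst ` P)}"
    "\<forall>i<length ys. \<forall>j<length xs. V_pat ! i ! j = ((xs ! j, ys ! i) \<in> P)"
    unfolding contains_def by blast
  have h: "length ys = 3" "length xs = 1" "sorted_wrt (>) ys"
    "set ys \<subseteq> {Min (snd ` P)..Max (snd ` P)}" "set xs \<subseteq> {Min (fst ` P)..Max (fst ` P)}"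
    "\<forall>i<length ys. \<forall>j<length xs. V_pat ! i ! j = ((xs ! j, ys ! i) \<in> P)"
    using h0 by (auto simp: V_pat_def)
  obtain y where y: "xs = [y]" using len1 h(2) by auto
  obtain a b c where x: "ys = [a,b,c]" using len3 h(1) by blast
  have "V_pat ! 0 ! 0 = ((y, a) \<in> P)" "V_pat ! 1 ! 0 = ((y, b) \<in> P)" "V_pat ! 2 ! 0 = ((y, c) \<in> P)"
    using h(6) unfolding x y by auto
  then show "\<exists>x y1 y2 y3. y2 < y1 \<and> y3 < y2 \<and>
   x \<in> {Min (fst ` P)..Max (fst ` P)} \<and> {y1,y2,y3} \<subseteq> {Min (snd ` P)..Max (snd ` P)} \<and>
   (x,y1) \<in> P \<and> (x,y2) \<notin> P \<and> (x,y3) \<in> P"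
    using h(3,4,5) unfolding x y V_pat_def by (intro exI[of _ y] exI[of _ a] exI[of _ b] exI[of _ c]) auto
next
  assume "\<exists>x y1 y2 y3. y2 < y1 \<and> y3 < y2 \<and>
   x \<in> {Min (fst ` P)..Max (fst ` P)} \<and> {y1,y2,y3} \<subseteq> {Min (snd ` P)..Max (snd ` P)} \<and>
   (x,y1) \<in> P \<and> (x,y2) \<notin> P \<and> (x,y3) \<in> P"
  then obtain y a b c where h: "b < a" "c < b" "y \<in> {Min (fst ` P)..Max (fst ` P)}"
    "{a,b,c} \<subseteq> {Min (snd ` P)..Max (snd ` P)}" "(y,a) \<in> P" "(y,b) \<notin> P" "(y,c) \<in> P" by blast
  show "contains P V_pat" unfolding contains_def
    apply (rule exI[of _ "[a,b,c]"], rule exI[of _ "[y]"])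
    using h by (auto simp: V_pat_def less_Suc_eq nth_Cons')
qed

lemma contains_D: "contains P D_pat \<longleftrightarrow> (\<exists>x1 x2 y1 y2. x1 < x2 \<and> y2 < y1 \<and>
   {x1,x2} \<subseteq> {Min (fst ` P)..Max (fst ` P)} \<and> {y1,y2} \<subseteq> {Min (snd ` P)..Max (snd ` P)} \<and>
   (x1,y1) \<in> P \<and> (x2,y1) \<in> P \<and> (x1,y2) \<notin> P \<and> (x2,y2) \<in> P)"
proof
  assume "contains P D_pat"
  then obtain ys xs where h0: "length ys = length D_pat" "\<forall>r\<in>set D_pat. length r = length xs" "sorted_wrt (<) xs" "sorted_wrt (>) ys"
    "set ys \<subseteq> {Min (snd ` P)..Max (snd ` P)}" "set xs \<subseteq> {Min (fst ` P)..Max (fst ` P)}"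
    "\<forall>i<length ys. \<forall>j<length xs. D_pat ! i ! j = ((xs ! j, ys ! i) \<in> P)"
    unfolding contains_def by blast
  have h: "length ys = 2" "length xs = 2" "sorted_wrt (<) xs" "sorted_wrt (>) ys"
    "set ys \<subseteq> {Min (snd ` P)..Max (snd ` P)}" "set xs \<subseteq> {Min (fst ` P)..Max (fst ` P)}"
    "\<forall>i<length ys. \<forall>j<length xs. D_pat ! i ! j = ((xs ! j, ys ! i) \<in> P)"
    using h0 by (auto simp: D_pat_def)
  obtain a b where y: "ys = [a,b]" using len2 h(1) by blast
  obtain c d where x: "xs = [c,d]" using len2 h(2) by blast
  have "D_pat ! 0 ! 0 = ((c, a) \<in> P)" "D_pat ! 0 ! 1 = ((d, a) \<in> P)"
       "D_pat ! 1 ! 0 = ((c, b) \<in> P)" "D_pat ! 1 ! 1 = ((d, b) \<in> P)"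
    using h(7) unfolding x y by auto
  then show "\<exists>x1 x2 y1 y2. x1 < x2 \<and> y2 < y1 \<and>
   {x1,x2} \<subseteq> {Min (fst ` P)..Max (fst ` P)} \<and> {y1,y2} \<subseteq> {Min (snd ` P)..Max (snd ` P)} \<and>
   (x1,y1) \<in> P \<and> (x2,y1) \<in> P \<and> (x1,y2) \<notin> P \<and> (x2,y2) \<in> P"
    using h(3,4,5,6) unfolding x y D_pat_def by (intro exI[of _ c] exI[of _ d] exI[of _ a] exI[of _ b]) auto
next
  assume "\<exists>x1 x2 y1 y2. x1 < x2 \<and> y2 < y1 \<and>
   {x1,x2} \<subseteq> {Min (fst ` P)..Max (fst ` P)} \<and> {y1,y2} \<subseteq> {Min (snd ` P)..Max (snd ` P)} \<and>
   (x1,y1) \<in> P \<and> (x2,y1) \<in> P \<and> (x1,y2) \<notin> P \<and> (x2,y2) \<in> P"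
  then obtain c d a b where h: "c < d" "b < a" "{c,d} \<subseteq> {Min (fst ` P)..Max (fst ` P)}"
    "{a,b} \<subseteq> {Min (snd ` P)..Max (snd ` P)}" "(c,a) \<in> P" "(d,a) \<in> P" "(c,b) \<notin> P" "(d,b) \<in> P" by blast
  show "contains P D_pat" unfolding contains_def
    apply (rule exI[of _ "[a,b]"], rule exI[of _ "[c,d]"])
    using h by (auto simp: D_pat_def less_Suc_eq nth_Cons')
qed

lemma in_box:
  assumes "finite P" "(x,y) \<in> P"
  shows "x \<in> {Min (fst ` P)..Max (fst ` P)}" "y \<in> {Min (snd ` P)..Max (snd ` P)}"
proof -
  have "x \<in> fst ` P" "y \<in> snd ` P" using assms(2) by force+
  then show "x \<in> {Min (fst ` P)..Max (fst ` P)}" "y \<in> {Min (snd ` P)..Max (snd ` P)}"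
    using assms(1) by auto
qed

lemma ne_mono: "(ne_step P)\<^sup>*\<^sup>* u v \<Longrightarrow> fst u \<le> fst v \<and> snd u \<le> snd v"
  by (induction rule: rtranclp_induct) (auto simp: ne_step_def)

lemma ne_row: "(ne_step P)\<^sup>*\<^sup>* u v \<Longrightarrow> u \<in> P \<Longrightarrow> snd u \<le> y \<Longrightarrow> y \<le> snd v \<Longrightarrow>
   \<exists>x. fst u \<le> x \<and> x \<le> fst v \<and> (x,y) \<in> P"
proof (induction arbitrary: y rule: rtranclp_induct)
  case base
  then show ?case by (intro exI[of _ "fst u"]) auto
next
  case (step w v)
  show ?case
  proof (cases "y \<le> snd w")
    case True
    with step obtain x where "fst u \<le> x" "x \<le> fst w" "(x,y) \<in> P" by auto
    moreover have "fst w \<le> fst v" using step(2) by (auto simp: ne_step_def)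
    ultimately show ?thesis by auto
  next
    case False
    then have "v = (fst w, snd w + 1)" "v \<in> P" using step(2,6) by (auto simp: ne_step_def)
    moreover have "fst u \<le> fst w" using ne_mono[OF step(1)] by auto
    moreover have "y = snd w + 1" using False step(6) calculation(1) by auto
    ultimately show ?thesis by (intro exI[of _ "fst v"]) auto
  qed
qed

lemma conn_row:
  "(\<lambda>u v. u \<in> P \<and> v \<in> P \<and> adjacent u v)\<^sup>*\<^sup>* u v \<Longrightarrow> snd u < b \<Longrightarrow> b \<le> snd v \<Longrightarrow>
   \<exists>x. (x, b - 1) \<in> P \<and> (x, b) \<in> P"
proof (induction rule: rtranclp_induct)
  case base
  then show ?case by auto
next
  case (step w v)
  show ?case
  proof (cases "b \<le> snd w")
    case True
    then show ?thesis using step by auto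
  next
    case False
    have adj: "\<bar>fst w - fst v\<bar> + \<bar>snd w - snd v\<bar> = 1" "w \<in> P" "v \<in> P"
      using step(2) by (auto simp: adjacent_def)
    then have "snd v = b" "snd w = b - 1" "fst w = fst v" using False step(5) by auto
    then show ?thesis using adj by (intro exI[of _ "fst v"]) (metis prod.collapse)
  qed
qed

lemma key:
  assumes pol: "polyomino P" and cv: "convex P"
    and noD: "\<forall>x1 x2 y1 y2. x1 < x2 \<and> y2 < y1 \<and> (x1,y1) \<in> P \<and> (x2,y1) \<in> P \<and> (x2,y2) \<in> P \<longrightarrow> (x1,y2) \<in> P"
    and c: "(a,b) \<in> P" and nW: "(a - 1, b) \<notin> P" and nS: "(a, b - 1) \<notin> P"
  shows "b = Min (snd ` P) \<and> a = Min {x. (x, Min (snd ` P)) \<in> P}"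
proof -
  have fin: "finite P" and ne: "P \<noteq> {}" using pol by (auto simp: polyomino_def)
  have rowc: "\<And>x1 x2 x y. (x1, y) \<in> P \<Longrightarrow> (x2, y) \<in> P \<Longrightarrow> x1 \<le> x \<Longrightarrow> x \<le> x2 \<Longrightarrow> (x, y) \<in> P"
    using cv unfolding convex_def by blast
  have left: "\<And>x. (x,b) \<in> P \<Longrightarrow> a \<le> x"
  proof (rule ccontr)
    fix x assume "(x,b) \<in> P" "\<not> a \<le> x"
    then have "(a - 1, b) \<in> P" using rowc[of x b a "a - 1"] c by auto
    then show False using nW by simp
  qed
  have lowb: "\<forall>p\<in>P. b \<le> snd p"
  proof (rule ccontr)
    assume "\<not> (\<forall>p\<in>P. b \<le> snd p)"
    then obtain p where p: "p \<in> P" "snd p < b" by auto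
    have "(\<lambda>u v. u \<in> P \<and> v \<in> P \<and> adjacent u v)\<^sup>*\<^sup>* p (a,b)"
      using pol p c unfolding polyomino_def by blast
    from conn_row[OF this p(2)] obtain x where x: "(x, b - 1) \<in> P" "(x, b) \<in> P" by auto
    have "a \<le> x" using left x(2) .
    moreover have "x \<noteq> a" using x nS by auto
    ultimately have "a < x" by auto
    then have "(a, b - 1) \<in> P" using spec[OF spec[OF spec[OF spec[OF noD, of a], of x], of b], of "b - 1"] c x by simp
    then show False using nS by simp
  qed
  have fs: "finite (snd ` P)" using fin by auto
  have bm: "b = Min (snd ` P)"
  proof (rule antisym)
    show "Min (snd ` P) \<le> b" using c fs by (metis Min_le image_eqI snd_conv)
    show "b \<le> Min (snd ` P)" using lowb ne fs by auto
  qed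
  have fx: "finite {x. (x, b) \<in> P}"
  proof -
    have "{x. (x, b) \<in> P} \<subseteq> fst ` P" by force
    then show ?thesis using fin finite_subset by blast
  qed
  have "a = Min {x. (x, b) \<in> P}"
  proof (rule antisym)
    show "Min {x. (x, b) \<in> P} \<le> a" using c fx by auto
    show "a \<le> Min {x. (x, b) \<in> P}" using left fx c by (subst Min_ge_iff) auto
  qed
  then show ?thesis using bm by simp
qed

lemma reach:
  assumes pol: "polyomino P" and cv: "convex P"
    and noD: "\<forall>x1 x2 y1 y2. x1 < x2 \<and> y2 < y1 \<and> (x1,y1) \<in> P \<and> (x2,y1) \<in> P \<and> (x2,y2) \<in> P \<longrightarrow> (x1,y2) \<in> P"
  shows "directed P"
proof -
  define y0 where "y0 = Min (snd ` P)"
  define x0 where "x0 = Min {x. (x, y0) \<in> P}"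
  define M where "M = Min ((\<lambda>p. fst p + snd p) ` P)"
  have fin: "finite P" and ne: "P \<noteq> {}" using pol by (auto simp: polyomino_def)
  have Mle: "\<And>p. p \<in> P \<Longrightarrow> M \<le> fst p + snd p" unfolding M_def using fin by auto
  have alt: "\<And>a b. (a,b) \<in> P \<Longrightarrow> (a,b) = (x0,y0) \<or> (a - 1, b) \<in> P \<or> (a, b - 1) \<in> P"
    using key[OF pol cv noD] unfolding x0_def y0_def by blast
  have main: "\<And>c. c \<in> P \<Longrightarrow> fst c + snd c \<le> M + int n \<Longrightarrow> (ne_step P)\<^sup>*\<^sup>* (x0,y0) c" for n
  proof (induction n)
    case 0
    obtain a b where ab: "c = (a,b)" by (cases c)
    have "(a - 1, b) \<notin> P" using Mle[of "(a - 1, b)"] 0 ab by auto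
    moreover have "(a, b - 1) \<notin> P" using Mle[of "(a, b - 1)"] 0 ab by auto
    ultimately have "c = (x0,y0)" using alt 0 ab by blast
    then show ?case by simp
  next
    case (Suc n)
    obtain a b where ab: "c = (a,b)" by (cases c)
    from alt[of a b] Suc.prems ab consider "c = (x0,y0)" | "(a - 1, b) \<in> P" | "(a, b - 1) \<in> P" by auto
    then show ?case
    proof cases
      case 1 then show ?thesis by simp
    next
      case 2
      then have "(ne_step P)\<^sup>*\<^sup>* (x0,y0) (a - 1, b)" using Suc ab by auto
      moreover have "ne_step P (a - 1, b) c" using 2 Suc.prems ab by (auto simp: ne_step_def)
      ultimately show ?thesis by simp
    next
      case 3
      then have "(ne_step P)\<^sup>*\<^sup>* (x0,y0) (a, b - 1)" using Suc ab by auto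
      moreover have "ne_step P (a, b - 1) c" using 3 Suc.prems ab by (auto simp: ne_step_def)
      ultimately show ?thesis by simp
    qed
  qed
  obtain p where p: "p \<in> P" using ne by auto
  have "(ne_step P)\<^sup>*\<^sup>* (x0,y0) p" using main[OF p, of "nat (fst p + snd p - M)"] Mle[OF p] by simp
  then have "(x0,y0) \<in> P"
    by (induction rule: converse_rtranclp_induct) (auto simp: ne_step_def p)
  moreover have "\<forall>c\<in>P. (ne_step P)\<^sup>*\<^sup>* (x0,y0) c"
  proof
    fix c assume c: "c \<in> P"
    show "(ne_step P)\<^sup>*\<^sup>* (x0,y0) c" using main[OF c, of "nat (fst c + snd c - M)"] Mle[OF c] by simp
  qed
  ultimately show ?thesis unfolding directed_def by blast
qed

theorem proposition13:
  shows "directed_convex_polyominoes = Av {H_pat, V_pat, D_pat}"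
proof (rule set_eqI, rule iffI)
  fix P assume "P \<in> directed_convex_polyominoes"
  then have pol: "polyomino P" and dir: "directed P" and cv: "convex P"
    by (auto simp: directed_convex_polyominoes_def)
  have rowc: "\<And>x1 x2 x y. (x1, y) \<in> P \<Longrightarrow> (x2, y) \<in> P \<Longrightarrow> x1 \<le> x \<Longrightarrow> x \<le> x2 \<Longrightarrow> (x, y) \<in> P"
    using cv unfolding convex_def by blast
  have colc: "\<And>y1 y2 x y. (x, y1) \<in> P \<Longrightarrow> (x, y2) \<in> P \<Longrightarrow> y1 \<le> y \<Longrightarrow> y \<le> y2 \<Longrightarrow> (x, y) \<in> P"
    using cv unfolding convex_def by blast
  have nH: "\<not> contains P H_pat" unfolding contains_H using rowc
    by (metis order_less_imp_le)
  have nV: "\<not> contains P V_pat" unfolding contains_V using colc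
    by (metis order_less_imp_le)
  have nD: "\<not> contains P D_pat"
  proof
    assume "contains P D_pat"
    then obtain x1 x2 y1 y2 where h: "x1 < x2" "y2 < y1" "(x1,y1) \<in> P" "(x2,y1) \<in> P" "(x1,y2) \<notin> P" "(x2,y2) \<in> P"
      unfolding contains_D by blast
    obtain s where s: "s \<in> P" "\<forall>c\<in>P. (ne_step P)\<^sup>*\<^sup>* s c" using dir unfolding directed_def by blast
    have r1: "(ne_step P)\<^sup>*\<^sup>* s (x1,y1)" using s h by auto
    have "snd s \<le> y2" using ne_mono[of P s "(x2,y2)"] s h by auto
    from ne_row[OF r1 s(1) this] h(2) obtain x where "x \<le> x1" "(x, y2) \<in> P" by auto
    then have "(x1,y2) \<in> P" using rowc[of x y2 x2 x1] h by auto
    then show False using h by simp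
  qed
  show "P \<in> Av {H_pat, V_pat, D_pat}" using pol nH nV nD by (auto simp: Av_def)
next
  fix P assume "P \<in> Av {H_pat, V_pat, D_pat}"
  then have pol: "polyomino P" and nH: "\<not> contains P H_pat" and nV: "\<not> contains P V_pat"
    and nD: "\<not> contains P D_pat" by (auto simp: Av_def)
  have fin: "finite P" using pol by (simp add: polyomino_def)
  have cv: "convex P" unfolding convex_def
  proof (intro conjI allI impI)
    fix x1 x2 x y assume a: "(x1, y) \<in> P \<and> (x2, y) \<in> P \<and> x1 \<le> x \<and> x \<le> x2"
    show "(x, y) \<in> P"
    proof (rule ccontr)
      assume n: "(x, y) \<notin> P"
      then have "x1 < x" "x < x2" using a by (auto simp: order_le_less)
      moreover have "y \<in> {Min (snd ` P)..Max (snd ` P)}" "x1 \<in> {Min (fst ` P)..Max (fst ` P)}"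
        "x2 \<in> {Min (fst ` P)..Max (fst ` P)}" using in_box[OF fin] a by blast+
      ultimately have "contains P H_pat" unfolding contains_H using a n
        by (intro exI[of _ y] exI[of _ x1] exI[of _ x] exI[of _ x2]) auto
      then show False using nH by simp
    qed
  next
    fix y1 y2 x y assume a: "(x, y1) \<in> P \<and> (x, y2) \<in> P \<and> y1 \<le> y \<and> y \<le> y2"
    show "(x, y) \<in> P"
    proof (rule ccontr)
      assume n: "(x, y) \<notin> P"
      then have "y1 < y" "y < y2" using a by (auto simp: order_le_less)
      moreover have "x \<in> {Min (fst ` P)..Max (fst ` P)}" "y1 \<in> {Min (snd ` P)..Max (snd ` P)}"
        "y2 \<in> {Min (snd ` P)..Max (snd ` P)}" using in_box[OF fin] a by blast+
      ultimately have "contains P V_pat" unfolding contains_V using a n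
        by (intro exI[of _ x] exI[of _ y2] exI[of _ y] exI[of _ y1]) auto
      then show False using nV by simp
    qed
  qed
  have noD: "(x1,y2) \<in> P" if "x1 < x2" "y2 < y1" "(x1,y1) \<in> P" "(x2,y1) \<in> P" "(x2,y2) \<in> P" for x1 x2 y1 y2
  proof (rule ccontr)
    assume n: "(x1, y2) \<notin> P"
    have "{x1,x2} \<subseteq> {Min (fst ` P)..Max (fst ` P)}" "{y1,y2} \<subseteq> {Min (snd ` P)..Max (snd ` P)}"
      using in_box[OF fin] that by blast+
    then have "contains P D_pat" unfolding contains_D using that n
      by (intro exI[of _ x1] exI[of _ x2] exI[of _ y1] exI[of _ y2]) auto
    then show False using nD by simp
  qed
  have "directed P"
    apply (rule reach[OF pol cv])
    apply (intro allI impI, elim conjE)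
    apply (rule noD)
        apply assumption+
    done
  then show "P \<in> directed_convex_polyominoes" using pol cv by (simp add: directed_convex_polyominoes_def)
qed

end
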